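(* Let $f:\{0,1\}^n\to\{0,1\}$ be given by query access, let $\mathcal{I}$ be a partition of $[n]$ into $r$ parts, let $W\in\mathcal{I}$ with $|W|\ge\frac{n}{2r}$, and let $J$ be a union of parts from $\mathcal{I}\setminus\{W\}$. There is a randomized algorithm taking $(f,\mathcal{I},J,W)$ that makes $O(\log r)$ queries to $f$ such that: (1) with probability $\mathrm{SymInf}_f(\overline{J})$ it returns a part $I\in\mathcal{I}\setminus\{W\}$ disjoint from $J$, and otherwise it returns $\emptyset$; (2) if $W$ contains no asymmetric variable of $f$ and the algorithm returns a part $I\in\mathcal{I}$, then $I$ contains an asymmetric variable of $f$.
   Context: $\mathcal{S}_J$ is the set of permutations of $[n]$ fixing every element outside $J$; $\pi x$ is the vector whose $\pi(i)$-th coordinate is $x_i$. $f$ is $J$-symmetric if $f(\pi x)=f(x)$ for all $x$ and $\pi\in\mathcal{S}_J$. $\mathrm{core}(f)$ is the maximum set $J$ such that $f$ is $J$-symmetric; variables in $[n]\setminus\mathrm{core}(f)$ are called asymmetric. $\overline{J}=[n]\setminus J$. $\mathrm{SymInf}_f(S)=\Pr_{x,\pi}[f(x)\ne f(\pi x)]$ with $x$ uniform in $\{0,1\}^n$ and $\pi$ uniform in $\mathcal{S}_S$. *)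

theory Defs
  imports "HOL-Probability.Probability" "HOL-Combinatorics.Permutations" "HOL-Library.Disjoint_Sets"
begin

text \<open>Coordinates are indexed by [n] = {0..<n}. A point of the Boolean cube is a function
  nat => bool that is False outside {0..<n}.\<close>

definition cube :: "nat \<Rightarrow> (nat \<Rightarrow> bool) set" where
  "cube n = {x. \<forall>i. n \<le> i \<longrightarrow> \<not> x i}"

definition perm_act :: "(nat \<Rightarrow> nat) \<Rightarrow> (nat \<Rightarrow> bool) \<Rightarrow> (nat \<Rightarrow> bool)" where
  "perm_act \<pi> x = (\<lambda>j. x (inv \<pi> j))"

definition sym_on :: "nat \<Rightarrow> ((nat \<Rightarrow> bool) \<Rightarrow> bool) \<Rightarrow> nat set \<Rightarrow> bool" where
  "sym_on n f J \<longleftrightarrow> (\<forall>x\<in>cube n. \<forall>\<pi>. \<pi> permutes J \<longrightarrow> f (perm_act \<pi> x) = f x)"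

definition core :: "nat \<Rightarrow> ((nat \<Rightarrow> bool) \<Rightarrow> bool) \<Rightarrow> nat set" where
  "core n f = (SOME J. J \<subseteq> {0..<n} \<and> sym_on n f J \<and>
       (\<forall>K. K \<subseteq> {0..<n} \<and> sym_on n f K \<longrightarrow> card K \<le> card J))"

definition asym_vars :: "nat \<Rightarrow> ((nat \<Rightarrow> bool) \<Rightarrow> bool) \<Rightarrow> nat set" where
  "asym_vars n f = {0..<n} - core n f"

definition SymInf :: "nat \<Rightarrow> ((nat \<Rightarrow> bool) \<Rightarrow> bool) \<Rightarrow> nat set \<Rightarrow> real" where
  "SymInf n f S = measure_pmf.prob
     (pair_pmf (pmf_of_set (cube n)) (pmf_of_set {\<pi>. \<pi> permutes S}))
     {(x, \<pi>). f x \<noteq> f (perm_act \<pi> x)}"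

text \<open>Query algorithms: a deterministic query algorithm is a decision tree whose inner nodes
  query f at a point and branch on the answer; a randomized query algorithm is a probability
  distribution over such trees (the randomness is independent of f).\<close>
datatype 'a qtree = Leaf 'a | Query "nat \<Rightarrow> bool" "bool \<Rightarrow> 'a qtree"

primrec run :: "((nat \<Rightarrow> bool) \<Rightarrow> bool) \<Rightarrow> 'a qtree \<Rightarrow> 'a" where
  "run f (Leaf a) = a"
| "run f (Query x k) = run f (k (f x))"

primrec depth :: "'a qtree \<Rightarrow> nat" where
  "depth (Leaf a) = 0"
| "depth (Query x k) = Suc (max (depth (k True)) (depth (k False)))"

end

theory Submission
  imports Defs
begin


definition cnt :: "(nat \<Rightarrow> bool) \<Rightarrow> nat set \<Rightarrow> nat" where
  "cnt z S = card {i\<in>S. z i}"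

lemma step_perm:
  assumes fin: "finite S" and out: "\<forall>i. i \<notin> S \<longrightarrow> z' i = z i"
    and c: "cnt z S = cnt z' S"
  shows "\<exists>\<sigma>. \<sigma> permutes S \<and> z' = perm_act \<sigma> z"
proof -
  define A1 where "A1 = {i\<in>S. z i}"
  define B1 where "B1 = {i\<in>S. z' i}"
  define A0 where "A0 = {i\<in>S. \<not> z i}"
  define B0 where "B0 = {i\<in>S. \<not> z' i}"
  have fA1: "finite A1" "finite B1" "finite A0" "finite B0" using fin
    by (auto simp: A1_def B1_def A0_def B0_def)
  have cA: "card A1 = card B1" using c by (simp add: cnt_def A1_def B1_def)
  have SA: "S = A1 \<union> A0" "A1 \<inter> A0 = {}" "S = B1 \<union> B0" "B1 \<inter> B0 = {}"
    by (auto simp: A1_def B1_def A0_def B0_def)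
  have "card A0 = card S - card A1" using SA fA1 fin by (simp add: card_Un_disjoint)
  moreover have "card B0 = card S - card B1" using SA(3,4) fA1 by (simp add: card_Un_disjoint)
  ultimately have cB: "card A0 = card B0" using cA by simp
  obtain g1 where g1: "bij_betw g1 A1 B1" using finite_same_card_bij fA1 cA by blast
  obtain g0 where g0: "bij_betw g0 A0 B0" using finite_same_card_bij fA1 cB by blast
  define \<sigma> where "\<sigma> = (\<lambda>i. if i \<in> A1 then g1 i else if i \<in> A0 then g0 i else i)"
  have b1: "bij_betw \<sigma> A1 B1" using g1 by (subst bij_betw_cong[where g=g1]) (auto simp: \<sigma>_def)
  have b0: "bij_betw \<sigma> A0 B0" using g0 SA
    by (subst bij_betw_cong[where g=g0]) (auto simp: \<sigma>_def)
  have "bij_betw \<sigma> (A1 \<union> A0) (B1 \<union> B0)"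
    by (rule bij_betw_combine[OF b1 b0]) (use SA in auto)
  hence bS: "bij_betw \<sigma> S S" using SA by simp
  have perm: "\<sigma> permutes S"
    by (rule bij_imp_permutes[OF bS]) (auto simp: \<sigma>_def A1_def A0_def)
  have "z' j = z (inv \<sigma> j)" for j
  proof (cases "j \<in> S")
    case True
    define i where "i = inv \<sigma> j"
    have ji: "\<sigma> i = j" using perm by (simp add: i_def permutes_inverses(1))
    have iS: "i \<in> S" using perm True by (simp add: i_def permutes_in_image permutes_inv)
    show ?thesis
    proof (cases "z i")
      case True
      hence "i \<in> A1" using iS by (simp add: A1_def)
      hence "\<sigma> i \<in> B1" using b1 by (auto simp: bij_betw_def)
      thus ?thesis using ji True by (simp add: B1_def i_def[symmetric])
    next
      case False
      hence "i \<in> A0" using iS by (simp add: A0_def)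
      hence "\<sigma> i \<in> B0" using b0 by (auto simp: bij_betw_def)
      thus ?thesis using ji False by (simp add: B0_def i_def[symmetric])
    qed
  next
    case False
    have "inv \<sigma> j = j" using permutes_inv[OF perm] False by (simp add: permutes_not_in)
    thus ?thesis using out False by simp
  qed
  thus ?thesis using perm by (auto simp: perm_act_def)
qed

lemma cnt_cong: "(\<And>i. i \<in> S \<Longrightarrow> z i = z' i) \<Longrightarrow> cnt z S = cnt z' S"
  unfolding cnt_def by (metis (mono_tags, lifting) Collect_cong)

lemma cnt_Un: "finite A \<Longrightarrow> finite B \<Longrightarrow> A \<inter> B = {} \<Longrightarrow> cnt z (A \<union> B) = cnt z A + cnt z B"
  unfolding cnt_def
proof -
  assume a: "finite A" "finite B" "A \<inter> B = {}"
  have e: "{i \<in> A \<union> B. z i} = {i\<in>A. z i} \<union> {i\<in>B. z i}" by auto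
  have "card ({i\<in>A. z i} \<union> {i\<in>B. z i}) = card {i \<in> A. z i} + card {i \<in> B. z i}"
    by (rule card_Un_disjoint) (use a in auto)
  thus "card {i \<in> A \<union> B. z i} = card {i \<in> A. z i} + card {i \<in> B. z i}"
    by (simp only: e)
qed

lemma cnt_le: "finite S \<Longrightarrow> cnt z S \<le> card S"
  unfolding cnt_def by (rule card_mono) auto

definition cfgok :: "nat set set \<Rightarrow> nat set \<Rightarrow> bool" where
  "cfgok D W \<longleftrightarrow> finite D \<and> (\<forall>K\<in>D. finite K) \<and> (\<forall>K\<in>D. \<forall>K'\<in>D. K \<noteq> K' \<longrightarrow> K \<inter> K' = {})
     \<and> (\<forall>K\<in>D. K \<inter> W = {}) \<and> finite W \<and> W \<noteq> {}"

lemma move: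
  assumes st: "cfgok D W" and I: "I \<in> D" and a': "a' \<le> card I" and t': "t' \<le> card W"
    and sum: "a' + t' = cnt z I + cnt z W"
  shows "\<exists>z'. (\<forall>i. i \<notin> I \<union> W \<longrightarrow> z' i = z i) \<and> cnt z' I = a' \<and> cnt z' W = t' \<and>
            (a' = cnt v I \<longrightarrow> (\<forall>i\<in>I. z' i = v i))"
proof -
  have fI: "finite I" and fW: "finite W" and dIW: "I \<inter> W = {}" using st I by (auto simp: cfgok_def)
  obtain A where A: "A \<subseteq> I" "card A = a'" "a' = cnt v I \<longrightarrow> A = {i\<in>I. v i}"
  proof (cases "a' = cnt v I")
    case True
    show ?thesis by (rule that[of "{i\<in>I. v i}"]) (use True in \<open>auto simp: cnt_def\<close>)
  next
    case False
    obtain A where "A \<subseteq> I" "card A = a'" using obtain_subset_with_card_n[OF a'] by metis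
    thus ?thesis using that False by blast
  qed
  obtain B where B: "B \<subseteq> W" "card B = t'" using obtain_subset_with_card_n[OF t'] by metis
  define z' where "z' = (\<lambda>i. if i \<in> I then i \<in> A else if i \<in> W then i \<in> B else z i)"
  have "{i\<in>I. z' i} = A" using A(1) by (auto simp: z'_def)
  hence c1: "cnt z' I = a'" using A by (simp add: cnt_def)
  have "{i\<in>W. z' i} = B" using B(1) dIW by (auto simp: z'_def)
  hence c2: "cnt z' W = t'" using B by (simp add: cnt_def)
  show ?thesis
    by (rule exI[of _ z'], intro conjI c1 c2) (use A in \<open>auto simp: z'_def\<close>)
qed
definition mism :: "nat set set \<Rightarrow> (nat \<Rightarrow> bool) \<Rightarrow> (nat \<Rightarrow> bool) \<Rightarrow> nat set set" where
  "mism D v z = {K\<in>D. \<exists>i\<in>K. z i \<noteq> v i}"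

definition dd :: "nat \<Rightarrow> nat \<Rightarrow> nat" where
  "dd a b = (if a \<le> b then b - a else a - b)"

definition Phi :: "nat set set \<Rightarrow> (nat \<Rightarrow> bool) \<Rightarrow> (nat \<Rightarrow> bool) \<Rightarrow> nat" where
  "Phi D v z = (\<Sum>K\<in>D. dd (cnt z K) (cnt v K))"

definition Mz :: "nat set set \<Rightarrow> nat set \<Rightarrow> (nat \<Rightarrow> bool) \<Rightarrow> (nat \<Rightarrow> bool) \<Rightarrow> nat" where
  "Mz D W v z = card (mism D v z) * card W + 2 * Phi D v z"

definition balanced :: "nat set set \<Rightarrow> nat set \<Rightarrow> (nat \<Rightarrow> bool) \<Rightarrow> (nat \<Rightarrow> bool) \<Rightarrow> bool" where
  "balanced D W v z \<longleftrightarrow> (\<Sum>K\<in>D. cnt z K) + cnt z W = (\<Sum>K\<in>D. cnt v K) + cnt v W"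

definition is_chain :: "nat set \<Rightarrow> nat set set \<Rightarrow> (nat \<Rightarrow> bool) \<Rightarrow> nat \<Rightarrow> (nat \<Rightarrow> nat \<Rightarrow> bool) \<Rightarrow> (nat \<Rightarrow> nat set) \<Rightarrow> bool" where
  "is_chain W D v L z l \<longleftrightarrow> z L = v \<and>
     (\<forall>j<L. l j \<in> insert W D \<and> (\<forall>i. i \<notin> l j \<union> W \<longrightarrow> z (Suc j) i = z j i) \<and>
            cnt (z j) (l j \<union> W) = cnt (z (Suc j)) (l j \<union> W)) \<and>
     (\<forall>j\<le>L. \<forall>i. i \<notin> \<Union>D \<union> W \<longrightarrow> z j i = v i)"

lemma is_chain_cons:
  assumes ch: "is_chain W D v L z l" and I: "I \<in> insert W D"
    and o: "\<forall>i. i \<notin> I \<union> W \<longrightarrow> z 0 i = u i" and c: "cnt u (I \<union> W) = cnt (z 0) (I \<union> W)"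
    and ag: "\<forall>i. i \<notin> \<Union>D \<union> W \<longrightarrow> u i = v i"
  shows "is_chain W D v (Suc L) (\<lambda>j. if j = 0 then u else z (j - 1)) (\<lambda>j. if j = 0 then I else l (j - 1))"
  unfolding is_chain_def
proof (intro conjI allI impI)
  show "(if Suc L = 0 then u else z (Suc L - 1)) = v" using ch by (simp add: is_chain_def)
next
  fix j assume j: "j < Suc L"
  show "(if j = 0 then I else l (j - 1)) \<in> insert W D"
    using I ch j by (cases j) (auto simp: is_chain_def)
  show "cnt (if j = 0 then u else z (j - 1)) ((if j = 0 then I else l (j - 1)) \<union> W) =
        cnt (if Suc j = 0 then u else z (Suc j - 1)) ((if j = 0 then I else l (j - 1)) \<union> W)"
    using c ch j by (cases j) (auto simp: is_chain_def)
  fix i assume "i \<notin> (if j = 0 then I else l (j - 1)) \<union> W"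
  thus "(if Suc j = 0 then u else z (Suc j - 1)) i = (if j = 0 then u else z (j - 1)) i"
    using o ch j by (cases j) (auto simp: is_chain_def)
next
  fix j i assume "j \<le> Suc L" "i \<notin> \<Union>D \<union> W"
  thus "(if j = 0 then u else z (j - 1)) i = v i"
    using ag ch by (cases j) (auto simp: is_chain_def)
qed

lemma gen_step:
  assumes st: "cfgok D W" and I: "I \<in> mism D v z" and a': "a' \<le> card I" and t': "t' \<le> card W"
    and sum: "a' + t' = cnt z I + cnt z W"
    and cond: "a' = cnt v I \<or> 2 * dd a' (cnt v I) + card W \<le> 2 * dd (cnt z I) (cnt v I)"
    and ag: "\<forall>i. i \<notin> \<Union>D \<union> W \<longrightarrow> z i = v i" and bal: "balanced D W v z"
  shows "\<exists>z'. (\<forall>i. i \<notin> I \<union> W \<longrightarrow> z' i = z i) \<and> cnt z (I \<union> W) = cnt z' (I \<union> W) \<and>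
           (\<forall>i. i \<notin> \<Union>D \<union> W \<longrightarrow> z' i = v i) \<and> balanced D W v z' \<and> Mz D W v z' + card W \<le> Mz D W v z"
proof -
  have ID: "I \<in> D" using I by (simp add: mism_def)
  have fD: "finite D" and fK: "\<forall>K\<in>D. finite K" and dj: "\<forall>K\<in>D. \<forall>K'\<in>D. K \<noteq> K' \<longrightarrow> K \<inter> K' = {}"
    and dW: "\<forall>K\<in>D. K \<inter> W = {}" and fW: "finite W" using st by (auto simp: cfgok_def)
  obtain z' where z': "\<forall>i. i \<notin> I \<union> W \<longrightarrow> z' i = z i" "cnt z' I = a'" "cnt z' W = t'"
    "a' = cnt v I \<longrightarrow> (\<forall>i\<in>I. z' i = v i)"
    using move[OF st ID a' t' sum] by blast
  have same: "cnt z' K = cnt z K" if "K \<in> D - {I}" for K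
  proof (rule cnt_cong)
    fix i assume "i \<in> K"
    have "K \<inter> I = {}" using dj ID that by auto
    moreover have "K \<inter> W = {}" using dW that by auto
    ultimately have "i \<notin> I \<union> W" using \<open>i \<in> K\<close> by blast
    thus "z' i = z i" using z' by simp
  qed
  have IW: "I \<inter> W = {}" using dW ID by blast
  have fI: "finite I" using fK ID by blast
  have c1: "cnt z (I \<union> W) = cnt z' (I \<union> W)"
    using cnt_Un[OF fI fW IW] z' sum by simp
  have ag': "\<forall>i. i \<notin> \<Union>D \<union> W \<longrightarrow> z' i = v i"
  proof (intro allI impI)
    fix i assume i: "i \<notin> \<Union>D \<union> W"
    hence "i \<notin> I \<union> W" using ID by blast
    thus "z' i = v i" using z' ag i by simp
  qed
  have s1: "(\<Sum>K\<in>D. cnt z' K) = a' + (\<Sum>K\<in>D-{I}. cnt z K)"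
    using sum.remove[OF fD ID, of "\<lambda>K. cnt z' K"] z' same by simp
  have s2: "(\<Sum>K\<in>D. cnt z K) = cnt z I + (\<Sum>K\<in>D-{I}. cnt z K)"
    using sum.remove[OF fD ID, of "\<lambda>K. cnt z K"] by simp
  have bal': "balanced D W v z'" using bal s1 s2 sum z' by (simp add: balanced_def)
  have p1: "Phi D v z' = dd a' (cnt v I) + (\<Sum>K\<in>D-{I}. dd (cnt z K) (cnt v K))"
    unfolding Phi_def using sum.remove[OF fD ID, of "\<lambda>K. dd (cnt z' K) (cnt v K)"] z' same by simp
  have p2: "Phi D v z = dd (cnt z I) (cnt v I) + (\<Sum>K\<in>D-{I}. dd (cnt z K) (cnt v K))"
    unfolding Phi_def using sum.remove[OF fD ID, of "\<lambda>K. dd (cnt z K) (cnt v K)"] by simp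
  have m1: "mism D v z' \<subseteq> mism D v z"
  proof
    fix K assume K: "K \<in> mism D v z'"
    show "K \<in> mism D v z"
    proof (cases "K = I")
      case True thus ?thesis using I by simp
    next
      case False
      from K obtain i where "K \<in> D" "i \<in> K" "z' i \<noteq> v i" by (auto simp: mism_def)
      moreover have "K \<inter> I = {}" using dj ID \<open>K \<in> D\<close> False by auto
      moreover have "K \<inter> W = {}" using dW \<open>K \<in> D\<close> by auto
      ultimately have "i \<notin> I \<union> W" by blast
      hence "z i \<noteq> v i" using z'(1) \<open>z' i \<noteq> v i\<close> by metis
      thus ?thesis using \<open>K \<in> D\<close> \<open>i \<in> K\<close> unfolding mism_def by blast
    qed
  qed
  have fm: "finite (mism D v z)" using fD by (simp add: mism_def)
  have "Mz D W v z' + card W \<le> Mz D W v z"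
  proof (cases "a' = cnt v I")
    case True
    hence "I \<notin> mism D v z'" using z' by (auto simp: mism_def)
    hence "mism D v z' \<subseteq> mism D v z - {I}" using m1 by blast
    hence "card (mism D v z') \<le> card (mism D v z - {I})"
      using fm by (intro card_mono) auto
    hence "card (mism D v z') \<le> card (mism D v z) - 1"
      using I fm by (simp add: card_Diff_singleton)
    moreover have "card (mism D v z) \<ge> 1" using I fm by (metis One_nat_def Suc_leI card_gt_0_iff empty_iff)
    ultimately have "card (mism D v z') + 1 \<le> card (mism D v z)" by linarith
    hence "(card (mism D v z') + 1) * card W \<le> card (mism D v z) * card W" by (rule mult_le_mono1)
    hence "card (mism D v z') * card W + card W \<le> card (mism D v z) * card W" by (simp add: algebra_simps)
    moreover have "Phi D v z' \<le> Phi D v z" using p1 p2 True by (simp add: dd_def)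
    ultimately show ?thesis by (simp add: Mz_def)
  next
    case False
    hence "2 * dd a' (cnt v I) + card W \<le> 2 * dd (cnt z I) (cnt v I)" using cond by simp
    hence "2 * Phi D v z' + card W \<le> 2 * Phi D v z" using p1 p2 by simp
    moreover have "card (mism D v z') \<le> card (mism D v z)" using card_mono[OF fm m1] .
    hence "card (mism D v z') * card W \<le> card (mism D v z) * card W" by (rule mult_le_mono1)
    ultimately show ?thesis unfolding Mz_def by linarith
  qed
  thus ?thesis using z' c1 ag' bal' by blast
qed
lemma nonmism_cnt: "K \<in> D \<Longrightarrow> K \<notin> mism D v u \<Longrightarrow> cnt u K = cnt v K"
  by (rule cnt_cong) (auto simp: mism_def)

lemma bal_int: "balanced D W v u \<Longrightarrow>
  (\<Sum>K\<in>D. int (cnt u K) - int (cnt v K)) = int (cnt v W) - int (cnt u W)"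
proof -
  assume b: "balanced D W v u"
  have "int (\<Sum>K\<in>D. cnt u K) + int (cnt u W) = int (\<Sum>K\<in>D. cnt v K) + int (cnt v W)"
    using b unfolding balanced_def by (metis of_nat_add)
  thus ?thesis by (simp add: sum_subtractf)
qed

lemma chain_ex:
  assumes st: "cfgok D W"
  shows "(\<forall>i. i \<notin> \<Union>D \<union> W \<longrightarrow> u i = v i) \<Longrightarrow> balanced D W v u \<Longrightarrow>
    \<exists>L z l. z 0 = u \<and> is_chain W D v L z l \<and> L * card W \<le> Mz D W v u + card W"
proof (induction "Mz D W v u" arbitrary: u rule: less_induct)
  case (less u)
  have fD: "finite D" and fK: "\<forall>K\<in>D. finite K" and fW: "finite W" and wne: "W \<noteq> {}"
    and dW: "\<forall>K\<in>D. K \<inter> W = {}"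
    using st by (auto simp: cfgok_def)
  have wpos: "card W > 0" using fW wne by (simp add: card_gt_0_iff)
  have stepper: "\<exists>L z l. z 0 = u \<and> is_chain W D v L z l \<and> L * card W \<le> Mz D W v u + card W"
    if I: "I \<in> mism D v u" and a': "a' \<le> card I" and t': "t' \<le> card W"
      and sm: "a' + t' = cnt u I + cnt u W"
      and cond: "a' = cnt v I \<or> 2 * dd a' (cnt v I) + card W \<le> 2 * dd (cnt u I) (cnt v I)"
    for I a' t'
  proof -
    obtain z' where z': "\<forall>i. i \<notin> I \<union> W \<longrightarrow> z' i = u i" "cnt u (I \<union> W) = cnt z' (I \<union> W)"
      "\<forall>i. i \<notin> \<Union>D \<union> W \<longrightarrow> z' i = v i" "balanced D W v z'" "Mz D W v z' + card W \<le> Mz D W v u"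
      using gen_step[OF st I a' t' sm cond less.prems] by blast
    have lt: "Mz D W v z' < Mz D W v u" using z'(5) wpos by linarith
    obtain L zz ll where ch: "zz 0 = z'" "is_chain W D v L zz ll" "L * card W \<le> Mz D W v z' + card W"
      using less.hyps[OF lt z'(3) z'(4)] by blast
    have ID: "I \<in> insert W D" using I by (simp add: mism_def)
    define Z where "Z = (\<lambda>j. if j = 0 then u else zz (j - 1))"
    define LL where "LL = (\<lambda>j. if j = 0 then I else ll (j - 1))"
    have c1: "is_chain W D v (Suc L) Z LL"
      unfolding Z_def LL_def
      by (rule is_chain_cons[OF ch(2) ID]) (use ch(1) z' less.prems in auto)
    have c2: "Suc L * card W \<le> Mz D W v u + card W" using ch(3) z'(5) by simp
    have c3: "Z 0 = u" by (simp add: Z_def)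
    show ?thesis using c1 c2 c3 by blast
  qed
  show ?case
  proof (cases "mism D v u = {}")
    case True
    have agK: "u i = v i" if "K \<in> D" "i \<in> K" for K i
      using True that by (auto simp: mism_def)
    have "(\<Sum>K\<in>D. cnt u K) = (\<Sum>K\<in>D. cnt v K)"
      by (rule sum.cong) (use agK in \<open>auto intro: cnt_cong\<close>)
    hence cW: "cnt u W = cnt v W" using less.prems(2) by (simp add: balanced_def)
    define z where "z = (\<lambda>j::nat. if j = 0 then u else v)"
    have "is_chain W D v 1 z (\<lambda>_. W)"
      unfolding is_chain_def z_def
      using cW less.prems(1) agK by (auto simp: le_Suc_eq)
    moreover have "1 * card W \<le> Mz D W v u + card W" by simp
    moreover have "z 0 = u" by (simp add: z_def)
    ultimately show ?thesis by blast
  next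
    case False
    then obtain I0 where I0: "I0 \<in> mism D v u" by blast
    have mD: "I \<in> D" if "I \<in> mism D v u" for I using that by (simp add: mism_def)
    have le: "cnt u I \<le> card I" "cnt v I \<le> card I" if "I \<in> mism D v u" for I
      using cnt_le fK mD[OF that] by auto
    have leW: "cnt u W \<le> card W" "cnt v W \<le> card W" using cnt_le fW by auto
    show ?thesis
    proof (cases "\<exists>I\<in>mism D v u. cnt u I = cnt v I")
      case True
      then obtain I where I: "I \<in> mism D v u" "cnt u I = cnt v I" by blast
      show ?thesis by (rule stepper[OF I(1), of "cnt u I" "cnt u W"]) (use le[OF I(1)] leW I(2) in auto)
    next
      case ne: False
      show ?thesis
      proof (cases "card W \<le> 2 * cnt u W")
        case big: True
        show ?thesis
        proof (cases "\<exists>I\<in>mism D v u. cnt u I < cnt v I")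
          case True
          then obtain I where I: "I \<in> mism D v u" "cnt u I < cnt v I" by blast
          define \<delta> where "\<delta> = min (cnt v I - cnt u I) (cnt u W)"
          show ?thesis
            by (rule stepper[OF I(1), of "cnt u I + \<delta>" "cnt u W - \<delta>"])
               (use le[OF I(1)] leW I(2) big in \<open>auto simp: \<delta>_def dd_def min_def\<close>)
        next
          case False
          hence gt: "\<forall>K\<in>mism D v u. cnt v K < cnt u K" using ne by force
          have nn: "\<forall>K\<in>D. 0 \<le> int (cnt u K) - int (cnt v K)"
            using gt nonmism_cnt by (metis diff_ge_0_iff_ge less_imp_le of_nat_le_iff order_refl)
          have "int (cnt u I0) - int (cnt v I0) \<le> (\<Sum>K\<in>D. int (cnt u K) - int (cnt v K))"
            by (rule member_le_sum) (use nn fD mD[OF I0] in auto)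
          hence bd: "int (cnt u I0) - int (cnt v I0) \<le> int (cnt v W) - int (cnt u W)"
            using bal_int[OF less.prems(2)] by simp
          show ?thesis
            by (rule stepper[OF I0, of "cnt v I0" "cnt u W + (cnt u I0 - cnt v I0)"])
               (use le[OF I0] leW gt I0 bd in auto)
        qed
      next
        case small: False
        show ?thesis
        proof (cases "\<exists>I\<in>mism D v u. cnt v I < cnt u I")
          case True
          then obtain I where I: "I \<in> mism D v u" "cnt v I < cnt u I" by blast
          define \<delta> where "\<delta> = min (cnt u I - cnt v I) (card W - cnt u W)"
          show ?thesis
            by (rule stepper[OF I(1), of "cnt u I - \<delta>" "cnt u W + \<delta>"])
               (use le[OF I(1)] leW I(2) small in \<open>auto simp: \<delta>_def dd_def min_def\<close>)
        next
          case False
          hence gt: "\<forall>K\<in>mism D v u. cnt u K < cnt v K" using ne by force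
          have nn: "\<forall>K\<in>D. 0 \<le> int (cnt v K) - int (cnt u K)"
            using gt nonmism_cnt by (metis diff_ge_0_iff_ge less_imp_le of_nat_le_iff order_refl)
          have "int (cnt v I0) - int (cnt u I0) \<le> (\<Sum>K\<in>D. int (cnt v K) - int (cnt u K))"
            by (rule member_le_sum) (use nn fD mD[OF I0] in auto)
          also have "\<dots> = - (\<Sum>K\<in>D. int (cnt u K) - int (cnt v K))"
            by (simp add: sum_negf[symmetric])
          finally have bd: "int (cnt v I0) - int (cnt u I0) \<le> int (cnt u W) - int (cnt v W)"
            using bal_int[OF less.prems(2)] by simp
          show ?thesis
            by (rule stepper[OF I0, of "cnt v I0" "cnt u W - (cnt v I0 - cnt u I0)"])
               (use le[OF I0] leW gt I0 bd in auto)
        qed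
      qed
    qed
  qed
qed
primrec bsk :: "nat \<Rightarrow> (nat \<Rightarrow> (nat \<Rightarrow> bool)) \<Rightarrow> (nat \<Rightarrow> 'a) \<Rightarrow> bool \<Rightarrow> nat \<Rightarrow> nat \<Rightarrow> 'a qtree" where
  "bsk 0 z l v lo hi = Leaf (l lo)"
| "bsk (Suc k) z l v lo hi = (if hi \<le> Suc lo then Leaf (l lo) else
     Query (z ((lo + hi) div 2)) (\<lambda>b. if b = v then bsk k z l v ((lo + hi) div 2) hi else bsk k z l v lo ((lo + hi) div 2)))"

lemma bsk_depth: "depth (bsk k z l v lo hi) \<le> k"
  by (induction k arbitrary: lo hi) (auto simp: max_def)

lemma bsk_run: "hi - lo \<le> 2 ^ k \<Longrightarrow> lo < hi \<Longrightarrow> f (z lo) = v \<Longrightarrow> f (z hi) \<noteq> v \<Longrightarrow>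
   \<exists>j. lo \<le> j \<and> j < hi \<and> f (z j) \<noteq> f (z (Suc j)) \<and> run f (bsk k z l v lo hi) = l j"
proof (induction k arbitrary: lo hi)
  case 0
  hence hl: "hi = Suc lo" by simp
  show ?case using "0.prems"(3,4) by (intro exI[of _ lo]) (simp add: hl)
next
  case (Suc k)
  show ?case
  proof (cases "hi \<le> Suc lo")
    case True
    hence hl: "hi = Suc lo" using Suc by simp
    show ?thesis using Suc.prems(3,4) True by (intro exI[of _ lo]) (simp add: hl)
  next
    case False
    define m where "m = (lo + hi) div 2"
    have m: "lo < m" "m < hi" "m - lo \<le> 2 ^ k" "hi - m \<le> 2 ^ k" using False Suc.prems(1) by (auto simp: m_def)
    show ?thesis
    proof (cases "f (z m) = v")
      case True
      obtain j where "m \<le> j" "j < hi" "f (z j) \<noteq> f (z (Suc j))" "run f (bsk k z l v m hi) = l j"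
        using Suc.IH[OF m(4) m(2) True Suc.prems(4)] by blast
      thus ?thesis using False True m by (auto simp: m_def[symmetric] intro!: exI[of _ j])
    next
      case F: False
      obtain j where "lo \<le> j" "j < m" "f (z j) \<noteq> f (z (Suc j))" "run f (bsk k z l v lo m) = l j"
        using Suc.IH[OF m(3) m(1) Suc.prems(3) F] by blast
      thus ?thesis using False F m by (auto simp: m_def[symmetric] intro!: exI[of _ j])
    qed
  qed
qed

lemma cube_finite: "finite (cube n)"
proof -
  have "cube n \<subseteq> (\<lambda>A i. i \<in> A) ` Pow {0..<n}"
  proof
    fix x assume "x \<in> cube n"
    hence "x = (\<lambda>i. i \<in> {i. x i})" "{i. x i} \<in> Pow {0..<n}"
      by (auto simp: cube_def) (meson not_le)
    thus "x \<in> (\<lambda>A i. i \<in> A) ` Pow {0..<n}" by blast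
  qed
  thus ?thesis by (rule finite_subset) simp
qed

lemma cube_ne: "cube n \<noteq> {}"
  by (auto simp: cube_def intro!: exI[of _ "\<lambda>_. False"])

lemma core_sym: "sym_on n f (core n f)" and core_sub: "core n f \<subseteq> {0..<n}"
proof -
  define S where "S = {K. K \<subseteq> {0..<n} \<and> sym_on n f K}"
  have fS: "finite S" unfolding S_def by (rule finite_subset[of _ "Pow {0..<n}"]) auto
  have eS: "{} \<in> S" unfolding S_def sym_on_def perm_act_def by (auto simp: permutes_empty)
  have "card ` S \<noteq> {}" using eS by blast
  then obtain J where J: "J \<in> S" "card J = Max (card ` S)"
    using Max_in[of "card ` S"] fS by (metis finite_imageI imageE)
  have "\<forall>K\<in>S. card K \<le> card J" using J fS by simp
  hence ex: "\<exists>J. J \<subseteq> {0..<n} \<and> sym_on n f J \<and> (\<forall>K. K \<subseteq> {0..<n} \<and> sym_on n f K \<longrightarrow> card K \<le> card J)"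
    using J(1) unfolding S_def by blast
  have "core n f \<subseteq> {0..<n} \<and> sym_on n f (core n f)"
    unfolding core_def using someI_ex[OF ex] by blast
  thus "sym_on n f (core n f)" "core n f \<subseteq> {0..<n}" by auto
qed

lemma cnt_perm:
  assumes "finite U" "\<pi> permutes U"
  shows "cnt (perm_act \<pi> x) U = cnt x U"
proof -
  have "{i\<in>U. perm_act \<pi> x i} = \<pi> ` {i\<in>U. x i}"
  proof
    show "{i \<in> U. perm_act \<pi> x i} \<subseteq> \<pi> ` {i \<in> U. x i}"
    proof
      fix i assume i: "i \<in> {i \<in> U. perm_act \<pi> x i}"
      have "inv \<pi> i \<in> U" using i assms(2) by (simp add: permutes_in_image permutes_inv)
      moreover have "\<pi> (inv \<pi> i) = i" using assms(2) by (simp add: permutes_inverses(1))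
      ultimately show "i \<in> \<pi> ` {i \<in> U. x i}" using i by (force simp: perm_act_def)
    qed
  next
    show "\<pi> ` {i \<in> U. x i} \<subseteq> {i \<in> U. perm_act \<pi> x i}"
      using assms(2) by (auto simp: perm_act_def permutes_in_image permutes_inverses(2))
  qed
  moreover have "inj_on \<pi> {i\<in>U. x i}" using permutes_inj[OF assms(2)] by (simp add: inj_on_def inj_def)
  ultimately show ?thesis unfolding cnt_def by (simp add: card_image)
qed

lemma cnt_union:
  assumes st: "cfgok D W"
  shows "cnt z (\<Union>D \<union> W) = (\<Sum>K\<in>D. cnt z K) + cnt z W"
proof -
  have fD: "finite D" and fK: "\<forall>K\<in>D. finite K" and fW: "finite W"
    and dj: "\<forall>K\<in>D. \<forall>K'\<in>D. K \<noteq> K' \<longrightarrow> K \<inter> K' = {}" and dW: "\<forall>K\<in>D. K \<inter> W = {}"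
    using st by (auto simp: cfgok_def)
  have "cnt z (\<Union>D \<union> W) = cnt z (\<Union>D) + cnt z W"
    by (rule cnt_Un) (use fD fK fW dW in auto)
  moreover have "{i\<in>\<Union>D. z i} = (\<Union>K\<in>D. {i\<in>K. z i})" by auto
  moreover have "card (\<Union>K\<in>D. {i\<in>K. z i}) = (\<Sum>K\<in>D. card {i\<in>K. z i})"
    by (rule card_UN_disjoint) (use fD fK dj in auto)
  ultimately show ?thesis by (simp add: cnt_def)
qed

lemma Mz_bound:
  assumes st: "cfgok D W"
  shows "Mz D W v z \<le> card D * card W + 2 * card (\<Union>D)"
proof -
  have fD: "finite D" and fK: "\<forall>K\<in>D. finite K"
    and dj: "\<forall>K\<in>D. \<forall>K'\<in>D. K \<noteq> K' \<longrightarrow> K \<inter> K' = {}"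
    using st by (auto simp: cfgok_def)
  have "card (mism D v z) \<le> card D" using fD by (intro card_mono) (auto simp: mism_def)
  hence a: "card (mism D v z) * card W \<le> card D * card W" by (rule mult_le_mono1)
  have "Phi D v z \<le> (\<Sum>K\<in>D. card K)" unfolding Phi_def
  proof (rule sum_mono)
    fix K assume "K \<in> D"
    hence "cnt z K \<le> card K" "cnt v K \<le> card K" using fK cnt_le by auto
    thus "dd (cnt z K) (cnt v K) \<le> card K" by (auto simp: dd_def)
  qed
  also have "(\<Sum>K\<in>D. card K) = card (\<Union>D)"
    by (rule card_Union_disjoint[symmetric]) (use fK dj in \<open>auto simp: pairwise_def disjnt_def\<close>)
  finally have "Phi D v z \<le> card (\<Union>D)" .
  thus ?thesis using a unfolding Mz_def by linarith
qed
lemma tree_ex: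
  assumes st: "cfgok D W" and U: "\<Union>D \<union> W = U" and Usub: "U \<subseteq> {0..<n}"
    and x: "x \<in> cube n" and pi: "\<pi> permutes U"
    and labG: "\<forall>I\<in>D. I \<in> G" and WG: "D = {} \<longrightarrow> W \<in> G" and eG: "{} \<notin> G"
    and bound: "Mz D W (perm_act \<pi> x) x + card W \<le> 2 ^ k * card W"
  shows "\<exists>t. depth t \<le> k + 2 \<and> (\<forall>f. (f x = f (perm_act \<pi> x) \<longrightarrow> run f t = {}) \<and>
           (f x \<noteq> f (perm_act \<pi> x) \<longrightarrow> run f t \<in> G \<and>
              (W \<inter> asym_vars n f = {} \<longrightarrow> run f t \<inter> asym_vars n f \<noteq> {})))"
proof -
  define v where "v = perm_act \<pi> x"
  have fD: "finite D" and fK: "\<forall>K\<in>D. finite K" and fW: "finite W" and wne: "W \<noteq> {}"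
    using st by (auto simp: cfgok_def)
  have wpos: "card W > 0" using fW wne by (simp add: card_gt_0_iff)
  have fU: "finite U" using Usub finite_subset by blast
  have out: "\<forall>i. i \<notin> U \<longrightarrow> x i = v i"
  proof (intro allI impI)
    fix i assume "i \<notin> U"
    hence "inv \<pi> i = i" using permutes_inv[OF pi] by (simp add: permutes_not_in)
    thus "x i = v i" by (simp add: v_def perm_act_def)
  qed
  have ag: "\<forall>i. i \<notin> \<Union>D \<union> W \<longrightarrow> x i = v i" using out U by simp
  have "cnt x (\<Union>D \<union> W) = cnt v (\<Union>D \<union> W)" using cnt_perm[OF fU pi, of x] U by (simp add: v_def)
  hence bal: "balanced D W v x" using cnt_union[OF st] by (simp add: balanced_def)
  obtain L z l where ch: "z 0 = x" "is_chain W D v L z l" "L * card W \<le> Mz D W v x + card W"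
    using chain_ex[OF st ag bal] by blast
  have Lk: "L \<le> 2 ^ k" using ch(3) bound wpos by (simp add: v_def) (metis le_trans mult_le_cancel2 not_gr0)
  have zL: "z L = v" using ch(2) by (simp add: is_chain_def)
  have vcube: "v \<in> cube n"
  proof -
    have "\<not> v i" if "n \<le> i" for i
    proof -
      have "i \<notin> U" using Usub that by auto
      thus ?thesis using out x that by (auto simp: cube_def)
    qed
    thus ?thesis by (simp add: cube_def)
  qed
  have zcube: "z j \<in> cube n" if "j \<le> L" for j
  proof -
    have "\<not> z j i" if "n \<le> i" for i
    proof -
      have "i \<notin> \<Union>D \<union> W" using Usub that U by auto
      hence "z j i = v i" using ch(2) \<open>j \<le> L\<close> by (simp add: is_chain_def)
      thus ?thesis using vcube that by (simp add: cube_def)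
    qed
    thus ?thesis by (simp add: cube_def)
  qed
  define lab where "lab j = (if l j = W \<and> D \<noteq> {} then (SOME I. I \<in> D) else l j)" for j
  have labP: "lab j \<in> G \<and> lab j \<subseteq> U \<and> (\<exists>\<sigma>. \<sigma> permutes (lab j \<union> W) \<and> z (Suc j) = perm_act \<sigma> (z j))"
    if j: "j < L" for j
  proof -
    have lj: "l j \<in> insert W D" "\<forall>i. i \<notin> l j \<union> W \<longrightarrow> z (Suc j) i = z j i"
      "cnt (z j) (l j \<union> W) = cnt (z (Suc j)) (l j \<union> W)"
      using ch(2) j by (auto simp: is_chain_def)
    have "finite (l j \<union> W)" using lj(1) fK fW by auto
    then obtain \<sigma> where \<sigma>: "\<sigma> permutes (l j \<union> W)" "z (Suc j) = perm_act \<sigma> (z j)"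
      using step_perm[OF _ lj(2) lj(3)] by blast
    have sub: "l j \<union> W \<subseteq> lab j \<union> W" by (auto simp: lab_def)
    have "\<sigma> permutes (lab j \<union> W)" by (rule permutes_subset[OF \<sigma>(1) sub])
    moreover have "lab j \<in> G"
    proof (cases "l j = W \<and> D \<noteq> {}")
      case True
      hence "(SOME I. I \<in> D) \<in> D" by (simp add: some_in_eq)
      thus ?thesis using True labG by (simp add: lab_def)
    next
      case False
      thus ?thesis using lj(1) labG WG by (auto simp: lab_def)
    qed
    moreover have "lab j \<subseteq> U"
    proof (cases "l j = W \<and> D \<noteq> {}")
      case True
      hence "(SOME I. I \<in> D) \<in> D" by (simp add: some_in_eq)
      thus ?thesis using True U by (auto simp: lab_def)
    next
      case False
      thus ?thesis using lj(1) U by (auto simp: lab_def)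
    qed
    ultimately show ?thesis using \<sigma>(2) by blast
  qed
  define t where "t = Query x (\<lambda>a. Query v (\<lambda>b. if a = b then Leaf {} else bsk k z lab a 0 L))"
  have dep: "depth t \<le> k + 2"
    unfolding t_def using bsk_depth[of k z lab] by (simp add: max_def)
  have "(f x = f v \<longrightarrow> run f t = {}) \<and>
           (f x \<noteq> f v \<longrightarrow> run f t \<in> G \<and> (W \<inter> asym_vars n f = {} \<longrightarrow> run f t \<inter> asym_vars n f \<noteq> {}))" for f
  proof (cases "f x = f v")
    case True thus ?thesis by (simp add: t_def)
  next
    case False
    have L0: "0 < L" using False ch(1) zL by (cases L) auto
    obtain j where j: "j < L" "f (z j) \<noteq> f (z (Suc j))" "run f (bsk k z lab (f x) 0 L) = lab j"
      using bsk_run[of L 0 k f z "f x" lab] Lk L0 ch(1) zL False by auto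
    have r: "run f t = lab j" using False j(3) by (simp add: t_def)
    obtain \<sigma> where \<sigma>: "\<sigma> permutes (lab j \<union> W)" "z (Suc j) = perm_act \<sigma> (z j)" using labP[OF j(1)] by blast
    have asym: "W \<inter> asym_vars n f = {} \<longrightarrow> lab j \<inter> asym_vars n f \<noteq> {}"
    proof (intro impI notI)
      assume W0: "W \<inter> asym_vars n f = {}" and L0: "lab j \<inter> asym_vars n f = {}"
      have "lab j \<union> W \<subseteq> U" using labP[OF j(1)] U by auto
      hence "lab j \<union> W \<subseteq> core n f" using W0 L0 Usub by (auto simp: asym_vars_def)
      hence "\<sigma> permutes core n f" using permutes_subset[OF \<sigma>(1)] by blast
      hence "f (perm_act \<sigma> (z j)) = f (z j)" using core_sym[of n f] zcube[of j] j(1)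
        by (simp add: sym_on_def)
      thus False using j(2) \<sigma>(2) by simp
    qed
    show ?thesis using False r labP[OF j(1)] asym by simp
  qed
  thus ?thesis using dep unfolding v_def by blast
qed
lemma pow_log_bound:
  assumes r: "1 \<le> r"
  shows "real r \<le> 2 ^ nat \<lceil>log 2 (real r)\<rceil>" and "real (nat \<lceil>log 2 (real r)\<rceil>) \<le> log 2 (real r) + 1"
    and "0 \<le> log 2 (real r)"
proof -
  have l0: "0 \<le> log 2 (real r)" using r by simp
  show "0 \<le> log 2 (real r)" by (rule l0)
  have c0: "0 \<le> \<lceil>log 2 (real r)\<rceil>" using l0 by simp
  have "real r = 2 powr (log 2 (real r))" using r by simp
  also have "\<dots> \<le> 2 powr (real_of_int \<lceil>log 2 (real r)\<rceil>)" by (rule powr_mono) auto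
  also have "real_of_int \<lceil>log 2 (real r)\<rceil> = real (nat \<lceil>log 2 (real r)\<rceil>)" using c0 by simp
  also have "2 powr real (nat \<lceil>log 2 (real r)\<rceil>) = 2 ^ nat \<lceil>log 2 (real r)\<rceil>" by (simp add: powr_realpow)
  finally show "real r \<le> 2 ^ nat \<lceil>log 2 (real r)\<rceil>" .
  show "real (nat \<lceil>log 2 (real r)\<rceil>) \<le> log 2 (real r) + 1" using c0 by linarith
qed

theorem lemma6:
  "\<exists>C::real. \<forall>(n::nat) (P::nat set set) (W::nat set) (J::nat set).
     partition_on {0..<n} P \<and> W \<in> P \<and> real (card W) \<ge> real n / (2 * real (card P)) \<and>
     (\<exists>Q. Q \<subseteq> P - {W} \<and> J = \<Union>Q)
     \<longrightarrow>
     (\<exists>A :: nat set qtree pmf.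
        (\<forall>T\<in>set_pmf A. real (depth T) \<le> C * (1 + log 2 (real (card P)))) \<and>
        (\<forall>f :: (nat \<Rightarrow> bool) \<Rightarrow> bool.
           (let out = map_pmf (run f) A;
                good = {I\<in>P. I \<inter> J = {} \<and> (I = W \<longrightarrow> J \<union> W = {0..<n})}
            in set_pmf out \<subseteq> good \<union> {{}} \<and>
               measure_pmf.prob out good = SymInf n f ({0..<n} - J) \<and>
               (W \<inter> asym_vars n f = {} \<longrightarrow>
                  (\<forall>I\<in>set_pmf out. I \<in> P \<longrightarrow> I \<inter> asym_vars n f \<noteq> {})))))"
proof (rule exI[of _ 6], intro allI impI)
  fix n :: nat and P :: "nat set set" and W J :: "nat set"
  assume H: "partition_on {0..<n} P \<and> W \<in> P \<and> real (card W) \<ge> real n / (2 * real (card P)) \<and>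
     (\<exists>Q. Q \<subseteq> P - {W} \<and> J = \<Union>Q)"
  then obtain Q where part: "partition_on {0..<n} P" and WP: "W \<in> P"
    and size: "real (card W) \<ge> real n / (2 * real (card P))" and Q: "Q \<subseteq> P - {W}" and J: "J = \<Union>Q"
    by blast
  have UP: "\<Union>P = {0..<n}" using partition_onD1[OF part] by simp
  have djP: "\<And>a b. a \<in> P \<Longrightarrow> b \<in> P \<Longrightarrow> a \<noteq> b \<Longrightarrow> a \<inter> b = {}"
    using partition_onD2[OF part] disjointD by blast
  have eP: "{} \<notin> P" using partition_onD3[OF part] .
  have subP: "\<And>K. K \<in> P \<Longrightarrow> K \<subseteq> {0..<n}" using UP by blast
  have fP: "finite P" by (rule finite_subset[of _ "Pow {0..<n}"]) (use subP in auto)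
  define r where "r = card P"
  have r1: "1 \<le> r" using WP fP by (simp add: r_def Suc_le_eq card_gt_0_iff) blast
  define D where "D = {I\<in>P. I \<inter> J = {}} - {W}"
  define G where "G = {I\<in>P. I \<inter> J = {} \<and> (I = W \<longrightarrow> J \<union> W = {0..<n})}"
  define U where "U = {0..<n} - J"
  have WJ: "W \<inter> J = {}" using Q djP WP unfolding J by blast
  have Jsub: "J \<subseteq> {0..<n}" using Q subP unfolding J by blast
  have fW: "finite W" using subP[OF WP] finite_subset by blast
  have wne: "W \<noteq> {}" using WP eP by blast
  have st: "cfgok D W" unfolding cfgok_def
  proof (intro conjI ballI impI)
    show "finite D" using fP by (simp add: D_def)
    show "finite K" if "K \<in> D" for K
    proof -
      have "K \<subseteq> {0..<n}" using that subP by (auto simp: D_def)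
      thus ?thesis using finite_subset by blast
    qed
    show "K \<inter> K' = {}" if "K \<in> D" "K' \<in> D" "K \<noteq> K'" for K K' using that djP by (auto simp: D_def)
    show "K \<inter> W = {}" if "K \<in> D" for K using that djP WP by (auto simp: D_def)
  qed (use fW wne in auto)
  have UD: "\<Union>D \<union> W = U"
  proof
    show "\<Union>D \<union> W \<subseteq> U" using subP[OF WP] WJ subP by (auto simp: U_def D_def)
  next
    show "U \<subseteq> \<Union>D \<union> W"
    proof
      fix i assume i: "i \<in> U"
      have "i \<in> \<Union>P" using i UP by (simp add: U_def)
      then obtain K where K: "K \<in> P" "i \<in> K" by blast
      have "K \<inter> J = {}"
      proof (rule ccontr)
        assume "K \<inter> J \<noteq> {}"
        then obtain K' where "K' \<in> Q" "K \<inter> K' \<noteq> {}" unfolding J by blast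
        hence "K = K'" using djP K Q by blast
        thus False using \<open>K' \<in> Q\<close> K i J by (auto simp: U_def)
      qed
      thus "i \<in> \<Union>D \<union> W" using K by (auto simp: D_def)
    qed
  qed
  have Usub: "U \<subseteq> {0..<n}" by (simp add: U_def)
  have labG: "\<forall>I\<in>D. I \<in> G" by (auto simp: D_def G_def)
  have WG: "D = {} \<longrightarrow> W \<in> G"
  proof
    assume "D = {}"
    hence "W = U" using UD by simp
    hence "J \<union> W = {0..<n}" using Jsub by (auto simp: U_def)
    thus "W \<in> G" using WP WJ by (simp add: G_def)
  qed
  have eG: "{} \<notin> G" using eP by (simp add: G_def)
  define k where "k = 3 + nat \<lceil>log 2 (real r)\<rceil>"
  have bound: "Mz D W (perm_act \<pi> x) x + card W \<le> 2 ^ k * card W" for \<pi> x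
  proof -
    have "card D \<le> card (P - {W})" using fP by (intro card_mono) (auto simp: D_def)
    hence cD: "card D + 1 \<le> r" using WP fP r1 by (simp add: r_def)
    have "card (\<Union>D) \<le> n" using UD Usub
      by (metis card_atLeastLessThan card_mono diff_zero finite_atLeastLessThan le_sup_iff)
    moreover have "real n \<le> 2 * real r * real (card W)"
      using size r1 by (simp add: r_def field_simps)
    ultimately have nb: "real (card (\<Union>D)) \<le> 2 * real r * real (card W)" by linarith
    have "Mz D W (perm_act \<pi> x) x + card W \<le> card D * card W + 2 * card (\<Union>D) + card W"
      using Mz_bound[OF st, of "perm_act \<pi> x" x] by simp
    hence "real (Mz D W (perm_act \<pi> x) x + card W) \<le> real (card D * card W + 2 * card (\<Union>D) + card W)"
      by (simp only: of_nat_le_iff)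
    also have "\<dots> = (real (card D) + 1) * real (card W) + 2 * real (card (\<Union>D))" by (simp add: algebra_simps)
    also have "\<dots> \<le> real r * real (card W) + 2 * (2 * real r * real (card W))"
      using cD nb by (intro add_mono mult_right_mono) auto
    also have "\<dots> \<le> 8 * real r * real (card W)" by simp
    also have "\<dots> \<le> 8 * 2 ^ nat \<lceil>log 2 (real r)\<rceil> * real (card W)"
      using pow_log_bound(1)[OF r1] by (intro mult_right_mono) auto
    also have "\<dots> = real (2 ^ k * card W)" by (simp add: k_def power_add)
    finally show ?thesis by linarith
  qed
  define Prop where "Prop x \<pi> t \<longleftrightarrow> depth t \<le> k + 2 \<and> (\<forall>f. (f x = f (perm_act \<pi> x) \<longrightarrow> run f t = {}) \<and>
           (f x \<noteq> f (perm_act \<pi> x) \<longrightarrow> run f t \<in> G \<and>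
              (W \<inter> asym_vars n f = {} \<longrightarrow> run f t \<inter> asym_vars n f \<noteq> {})))" for x \<pi> t
  define T where "T x \<pi> = (SOME t. Prop x \<pi> t)" for x \<pi>
  have TP: "Prop x \<pi> (T x \<pi>)" if "x \<in> cube n" "\<pi> permutes U" for x \<pi>
    unfolding T_def Prop_def
    by (rule someI_ex, rule tree_ex[OF st UD Usub that labG WG eG bound])
  define X where "X = pair_pmf (pmf_of_set (cube n)) (pmf_of_set {\<pi>. \<pi> permutes U})"
  have fU: "finite U" using Usub finite_subset by blast
  have setX: "set_pmf X = cube n \<times> {\<pi>. \<pi> permutes U}"
    unfolding X_def using cube_finite cube_ne finite_permutations[OF fU]
    by (simp add: set_pmf_of_set) (metis empty_iff mem_Collect_eq permutes_id set_pmf_of_set)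
  define A where "A = map_pmf (\<lambda>(x, \<pi>). T x \<pi>) X"
  show "\<exists>A :: nat set qtree pmf.
        (\<forall>T\<in>set_pmf A. real (depth T) \<le> 6 * (1 + log 2 (real (card P)))) \<and>
        (\<forall>f :: (nat \<Rightarrow> bool) \<Rightarrow> bool.
           (let out = map_pmf (run f) A;
                good = {I\<in>P. I \<inter> J = {} \<and> (I = W \<longrightarrow> J \<union> W = {0..<n})}
            in set_pmf out \<subseteq> good \<union> {{}} \<and>
               measure_pmf.prob out good = SymInf n f ({0..<n} - J) \<and>
               (W \<inter> asym_vars n f = {} \<longrightarrow>
                  (\<forall>I\<in>set_pmf out. I \<in> P \<longrightarrow> I \<inter> asym_vars n f \<noteq> {}))))"
  proof (rule exI[of _ A], intro conjI allI ballI)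
    fix t assume "t \<in> set_pmf A"
    then obtain x \<pi> where xp: "x \<in> cube n" "\<pi> permutes U" "t = T x \<pi>" using setX by (auto simp: A_def)
    have "depth t \<le> k + 2" using TP[OF xp(1,2)] xp(3) by (simp add: Prop_def)
    hence "real (depth t) \<le> 5 + real (nat \<lceil>log 2 (real r)\<rceil>)" by (simp add: k_def)
    also have "\<dots> \<le> 6 * (1 + log 2 (real r))"
    proof -
      have a: "real (nat \<lceil>log 2 (real r)\<rceil>) \<le> log 2 (real r) + 1" and b: "0 \<le> log 2 (real r)"
        using pow_log_bound(2,3)[OF r1] by auto
      show ?thesis using a b by (smt (verit))
    qed
    finally show "real (depth t) \<le> 6 * (1 + log 2 (real (card P)))" by (simp add: r_def)
  next
    fix f :: "(nat \<Rightarrow> bool) \<Rightarrow> bool"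
    have G_eq: "{I\<in>P. I \<inter> J = {} \<and> (I = W \<longrightarrow> J \<union> W = {0..<n})} = G" by (simp add: G_def)
    have sout: "set_pmf (map_pmf (run f) A) = (\<lambda>(x,\<pi>). run f (T x \<pi>)) ` (cube n \<times> {\<pi>. \<pi> permutes U})"
      by (auto simp: A_def setX image_image case_prod_beta)
    have s1: "set_pmf (map_pmf (run f) A) \<subseteq> G \<union> {{}}"
    proof
      fix I assume "I \<in> set_pmf (map_pmf (run f) A)"
      then obtain x \<pi> where xp: "x \<in> cube n" "\<pi> permutes U" "I = run f (T x \<pi>)" using sout by auto
      thus "I \<in> G \<union> {{}}" using TP[OF xp(1,2)] by (cases "f x = f (perm_act \<pi> x)") (auto simp: Prop_def)
    qed
    have "measure_pmf.prob (map_pmf (run f) A) G = measure_pmf.prob X ((\<lambda>p. run f (T (fst p) (snd p))) -` G)"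
      by (simp add: A_def map_pmf_comp case_prod_beta)
    also have "\<dots> = measure_pmf.prob X (((\<lambda>p. run f (T (fst p) (snd p))) -` G) \<inter> set_pmf X)"
      by (simp add: measure_Int_set_pmf)
    also have "((\<lambda>p. run f (T (fst p) (snd p))) -` G) \<inter> set_pmf X = {(x, \<pi>). f x \<noteq> f (perm_act \<pi> x)} \<inter> set_pmf X"
    proof (intro set_eqI iffI)
      fix p assume p: "p \<in> ((\<lambda>p. run f (T (fst p) (snd p))) -` G) \<inter> set_pmf X"
      obtain x \<pi> where xp: "p = (x, \<pi>)" by force
      have c: "x \<in> cube n" "\<pi> permutes U" using p xp setX by auto
      show "p \<in> {(x, \<pi>). f x \<noteq> f (perm_act \<pi> x)} \<inter> set_pmf X"
        using TP[OF c] p xp eG by (cases "f x = f (perm_act \<pi> x)") (auto simp: Prop_def)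
    next
      fix p assume p: "p \<in> {(x, \<pi>). f x \<noteq> f (perm_act \<pi> x)} \<inter> set_pmf X"
      obtain x \<pi> where xp: "p = (x, \<pi>)" by force
      have c: "x \<in> cube n" "\<pi> permutes U" using p xp setX by auto
      show "p \<in> ((\<lambda>p. run f (T (fst p) (snd p))) -` G) \<inter> set_pmf X"
        using TP[OF c] p xp by (auto simp: Prop_def)
    qed
    also have "measure_pmf.prob X ({(x, \<pi>). f x \<noteq> f (perm_act \<pi> x)} \<inter> set_pmf X) =
       measure_pmf.prob X {(x, \<pi>). f x \<noteq> f (perm_act \<pi> x)}"
      by (rule measure_Int_set_pmf)
    also have "\<dots> = SymInf n f ({0..<n} - J)"
      by (simp only: SymInf_def X_def U_def)
    finally have s2: "measure_pmf.prob (map_pmf (run f) A) G = SymInf n f ({0..<n} - J)" .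
    have s3: "W \<inter> asym_vars n f = {} \<longrightarrow> (\<forall>I\<in>set_pmf (map_pmf (run f) A). I \<in> P \<longrightarrow> I \<inter> asym_vars n f \<noteq> {})"
    proof (intro impI ballI)
      fix I assume W0: "W \<inter> asym_vars n f = {}" and I: "I \<in> set_pmf (map_pmf (run f) A)" and IP: "I \<in> P"
      then obtain x \<pi> where xp: "x \<in> cube n" "\<pi> permutes U" "I = run f (T x \<pi>)" using sout by auto
      show "I \<inter> asym_vars n f \<noteq> {}"
        using TP[OF xp(1,2)] xp(3) W0 IP eP by (cases "f x = f (perm_act \<pi> x)") (auto simp: Prop_def)
    qed
    show "let out = map_pmf (run f) A;
                good = {I\<in>P. I \<inter> J = {} \<and> (I = W \<longrightarrow> J \<union> W = {0..<n})}
            in set_pmf out \<subseteq> good \<union> {{}} \<and>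
               measure_pmf.prob out good = SymInf n f ({0..<n} - J) \<and>
               (W \<inter> asym_vars n f = {} \<longrightarrow>
                  (\<forall>I\<in>set_pmf out. I \<in> P \<longrightarrow> I \<inter> asym_vars n f \<noteq> {}))"
      unfolding Let_def G_eq using s1 s2 s3 by blast
  qed
qed

end
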